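(* Let $U\subset\mathbb{R}^s$ be open, $X:U\to\mathbb{R}^{n+1}_1$ a spacelike embedding, $n^T$ a smooth future directed unit timelike normal field along $X$ and $n^S$ a smooth unit spacelike normal field along $X$ with $\langle n^S,n^T\rangle=0$. Write $\mathbb{LG}(n^T,n^S)(u)=n^T(u)+n^S(u)=(\ell_0(u),\ell_1(u),\dots,\ell_n(u))$ and $\widetilde{\mathbb{LG}}(n^T,n^S)=\mathbb{LG}(n^T,n^S)/\ell_0$. Then for each $i=1,\dots,s$, $$\pi^\tau\circ \widetilde{\mathbb{LG}}(n^T,n^S)_{u_i}=-\sum_{j=1}^s\frac{1}{\ell_0(u)}h_i^j(n^T,n^S)\,X_{u_j}.$$
   Context: $\mathbb{R}^{n+1}_1$ is $\mathbb{R}^{n+1}$ with $\langle x,y\rangle=-x_0y_0+\sum_{i=1}^n x_iy_i$. An embedding is spacelike if all its tangent spaces consist of spacelike vectors ($\langle v,v\rangle>0$). A normal vector at $p=X(u)$ is a vector in the pseudo-orthogonal complement $N_p(M)$ of $T_pM=\mathrm{span}\{X_{u_1},\dots,X_{u_s}\}$. Future directed unit timelike: $\langle n^T,n^T\rangle=-1$ and zeroth coordinate positive; unit spacelike: $\langle n^S,n^S\rangle=1$. $\pi^\tau:\mathbb{R}^{n+1}_1=T_pM\oplus N_p(M)\to T_pM$ is the projection. $g_{ij}=\langle X_{u_i},X_{u_j}\rangle$, $(g^{ij})=(g_{ij})^{-1}$, $h_{ij}(n^T,n^S)=\langle-(n^T+n^S)_{u_i},X_{u_j}\rangle$, and $h_i^j=\sum_m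 h_{im}g^{mj}$. (Note $\ell_0>0$ since $n^T+n^S$ is a nonzero lightlike vector.) *)

theory Defs
  imports "HOL-Analysis.Analysis"
begin

text \<open>Minkowski space R^{n+1}_1 is modelled as real \<times> (real^'n):
  the first component is the time coordinate x_0, the second the spatial
  coordinates (x_1,...,x_n).\<close>

definition lor :: "real \<times> (real^'n) \<Rightarrow> real \<times> (real^'n) \<Rightarrow> real" where
  "lor x y = - fst x * fst y + snd x \<bullet> snd y"

fun Ck_on :: "nat \<Rightarrow> 'a::euclidean_space set \<Rightarrow> ('a \<Rightarrow> 'b::euclidean_space) \<Rightarrow> bool" where
  "Ck_on 0 U f = continuous_on U f"
| "Ck_on (Suc k) U f = (\<exists>f'. (\<forall>x\<in>U. (f has_derivative f' x) (at x)) \<and>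
       (\<forall>v. Ck_on k U (\<lambda>x. f' x v)))"

definition smooth_on :: "'a::euclidean_space set \<Rightarrow> ('a \<Rightarrow> 'b::euclidean_space) \<Rightarrow> bool" where
  "smooth_on U f = (\<forall>k. Ck_on k U f)"

definition pderiv_at :: "(real^'s \<Rightarrow> 'b::real_normed_vector) \<Rightarrow> 's \<Rightarrow> real^'s \<Rightarrow> 'b" where
  "pderiv_at f i u = frechet_derivative f (at u) (axis i 1)"

definition spacelike_embedding :: "(real^'s) set \<Rightarrow> (real^'s \<Rightarrow> real \<times> (real^'n)) \<Rightarrow> bool" where
  "spacelike_embedding U X \<longleftrightarrow>
     smooth_on U X \<and> inj_on X U \<and> homeomorphism U (X ` U) X (inv_into U X) \<and>
     (\<forall>u\<in>U. \<forall>v. v \<noteq> 0 \<longrightarrow> lor (frechet_derivative X (at u) v) (frechet_derivative X (at u) v) > 0)"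

definition tangent_space :: "(real^'s \<Rightarrow> real \<times> (real^'n)) \<Rightarrow> real^'s \<Rightarrow> (real \<times> (real^'n)) set" where
  "tangent_space X u = span (range (\<lambda>i. pderiv_at X i u))"

definition normal_vector :: "(real^'s \<Rightarrow> real \<times> (real^'n)) \<Rightarrow> real^'s \<Rightarrow> real \<times> (real^'n) \<Rightarrow> bool" where
  "normal_vector X u w \<longleftrightarrow> (\<forall>i. lor w (pderiv_at X i u) = 0)"

definition pi_tau :: "(real^'s \<Rightarrow> real \<times> (real^'n)) \<Rightarrow> real^'s \<Rightarrow> real \<times> (real^'n) \<Rightarrow> real \<times> (real^'n)" where
  "pi_tau X u v = (THE w. w \<in> tangent_space X u \<and> normal_vector X u (v - w))"

definition gmat :: "(real^'s \<Rightarrow> real \<times> (real^'n)) \<Rightarrow> real^'s \<Rightarrow> real^'s^'s" where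
  "gmat X u = (\<chi> i j. lor (pderiv_at X i u) (pderiv_at X j u))"

definition hmat :: "(real^'s \<Rightarrow> real \<times> (real^'n)) \<Rightarrow> (real^'s \<Rightarrow> real \<times> (real^'n))
     \<Rightarrow> (real^'s \<Rightarrow> real \<times> (real^'n)) \<Rightarrow> real^'s \<Rightarrow> real^'s^'s" where
  "hmat X nT nS u = (\<chi> i j. lor (- pderiv_at (\<lambda>v. nT v + nS v) i u) (pderiv_at X j u))"

definition hup :: "(real^'s \<Rightarrow> real \<times> (real^'n)) \<Rightarrow> (real^'s \<Rightarrow> real \<times> (real^'n))
     \<Rightarrow> (real^'s \<Rightarrow> real \<times> (real^'n)) \<Rightarrow> real^'s \<Rightarrow> 's \<Rightarrow> 's \<Rightarrow> real" where
  "hup X nT nS u i j = (\<Sum>m\<in>UNIV. hmat X nT nS u $ i $ m * matrix_inv (gmat X u) $ m $ j)"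

definition LG :: "(real^'s \<Rightarrow> real \<times> (real^'n)) \<Rightarrow> (real^'s \<Rightarrow> real \<times> (real^'n)) \<Rightarrow> real^'s \<Rightarrow> real \<times> (real^'n)" where
  "LG nT nS u = nT u + nS u"

definition LGt :: "(real^'s \<Rightarrow> real \<times> (real^'n)) \<Rightarrow> (real^'s \<Rightarrow> real \<times> (real^'n)) \<Rightarrow> real^'s \<Rightarrow> real \<times> (real^'n)" where
  "LGt nT nS u = (1 / fst (LG nT nS u)) *\<^sub>R LG nT nS u"

end

theory Submission imports Defs begin

lemma lor_sym: "lor x y = lor y x" by (simp add: lor_def inner_commute)
lemma lor_add_left: "lor (x + y) z = lor x z + lor y z" by (simp add: lor_def inner_add_left algebra_simps)
lemma lor_diff_left: "lor (x - y) z = lor x z - lor y z" by (simp add: lor_def inner_diff_left algebra_simps)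
lemma lor_scale_left: "lor (c *\<^sub>R x) z = c * lor x z" by (simp add: lor_def algebra_simps)
lemma lor_minus_left: "lor (- x) z = - lor x z" by (simp add: lor_def)
lemma lor_zero_left: "lor 0 z = 0" by (simp add: lor_def)
lemma lor_sum_left: "lor (\<Sum>j\<in>A. f j) z = (\<Sum>j\<in>A. lor (f j) z)"
  by (induction A rule: infinite_finite_induct) (simp_all add: lor_add_left lor_zero_left)

lemma lor_sum_right: "lor z (\<Sum>j\<in>A. f j) = (\<Sum>j\<in>A. lor z (f j))"
  using lor_sum_left[of f A z] by (simp add: lor_sym)
lemma lor_scale_right: "lor z (c *\<^sub>R x) = c * lor z x" by (simp add: lor_def algebra_simps)
lemma lor_minus_right: "lor z (- x) = - lor z x" by (simp add: lor_def)

lemma Ck1_deriv: assumes "smooth_on U f" "x \<in> U"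
  shows "(f has_derivative frechet_derivative f (at x)) (at x)"
proof -
  have "Ck_on (Suc 0) U f" using assms(1) unfolding smooth_on_def by blast
  then obtain f' where "\<forall>x\<in>U. (f has_derivative f' x) (at x)" by auto
  then have "(f has_derivative f' x) (at x)" using assms(2) by blast
  then show ?thesis using frechet_derivative_at by metis
qed

lemma l0_pos:
  fixes a b :: real and A B :: "real^'n"
  assumes "-a*a + A\<bullet>A = -1" "a > 0" "-b*b + B\<bullet>B = 1" "-b*a + B\<bullet>A = 0"
  shows "a + b > 0"
proof -
  have cs: "(B\<bullet>A)^2 \<le> (B\<bullet>B)*(A\<bullet>A)" by (rule Cauchy_Schwarz_ineq)
  have e: "B\<bullet>A = b*a" "B\<bullet>B = 1+b*b" "A\<bullet>A = a*a-1" using assms by linarith+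
  have "(b*a)^2 \<le> (1+b*b)*(a*a - 1)" using cs unfolding e .
  hence "b*b < a*a" by (simp add: power2_eq_square algebra_simps)
  hence "\<bar>b\<bar> < a" using assms(2) by (metis abs_mult_self_eq abs_of_pos abs_ge_zero abs_mult_less linorder_not_less mult_mono)
  thus ?thesis by linarith
qed

lemma basis_exp_R: "(\<Sum>j\<in>UNIV. (c$j) *\<^sub>R (axis j 1 :: real^'s)) = c"
  by (simp add: vec_eq_iff axis_def if_distrib cong: if_cong)

theorem proposition3p3:
  fixes U :: "(real^'s) set"
    and X nT nS :: "real^'s \<Rightarrow> real \<times> (real^'n)"
  assumes "open U"
    and "spacelike_embedding U X"
    and "smooth_on U nT" and "smooth_on U nS"
    and "\<forall>u\<in>U. normal_vector X u (nT u) \<and> lor (nT u) (nT u) = -1 \<and> fst (nT u) > 0"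
    and "\<forall>u\<in>U. normal_vector X u (nS u) \<and> lor (nS u) (nS u) = 1"
    and "\<forall>u\<in>U. lor (nS u) (nT u) = 0"
    and "u \<in> U"
  shows "pi_tau X u (pderiv_at (LGt nT nS) i u) =
           - (\<Sum>j\<in>UNIV. ((1 / fst (LG nT nS u)) * hup X nT nS u i j) *\<^sub>R pderiv_at X j u)"
proof -
  define dX where "dX = frechet_derivative X (at u)"
  have sX: "smooth_on U X" and posX: "\<forall>v. v \<noteq> 0 \<longrightarrow> lor (dX v) (dX v) > 0"
    using assms(2,8) unfolding spacelike_embedding_def dX_def by auto
  have hX: "(X has_derivative dX) (at u)" using Ck1_deriv[OF sX assms(8)] dX_def by simp
  have linX: "linear dX" using has_derivative_linear[OF hX] .
  define Xj where "Xj j = pderiv_at X j u" for j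
  have Xj: "Xj j = dX (axis j 1)" for j unfolding Xj_def pderiv_at_def dX_def ..
  have dXc: "dX c = (\<Sum>j\<in>UNIV. (c$j) *\<^sub>R Xj j)" for c
  proof -
    have "dX c = dX (\<Sum>j\<in>UNIV. (c$j) *\<^sub>R axis j 1)" by (simp only: basis_exp_R)
    also have "\<dots> = (\<Sum>j\<in>UNIV. (c$j) *\<^sub>R Xj j)"
      by (simp add: linear_sum[OF linX] linear_scale[OF linX] Xj)
    finally show ?thesis .
  qed
  have ker: "c = 0" if "\<forall>k. lor (dX c) (Xj k) = 0" for c
  proof (rule ccontr)
    assume "c \<noteq> 0"
    hence "lor (dX c) (dX c) > 0" using posX by blast
    moreover have "lor (dX c) (dX c) = 0"
      apply (subst (2) dXc) using that by (simp add: lor_sum_right lor_scale_right)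
    ultimately show False by simp
  qed
  define G where "G = gmat X u"
  have Gjk: "G $ j $ k = lor (Xj j) (Xj k)" for j k unfolding G_def gmat_def Xj_def by simp
  have "inj ((*v) G)"
  proof (subst linear_injective_0[OF matrix_vector_mul_linear], intro allI impI)
    fix c assume "G *v c = 0"
    hence "(G *v c) $ k = 0" for k by simp
    hence "lor (dX c) (Xj k) = 0" for k
      by (subst lor_sym) (simp add: matrix_vector_mult_def Gjk dXc lor_sum_right lor_scale_right mult.commute)
    thus "c = 0" using ker by blast
  qed
  hence "invertible G" using matrix_left_invertible_injective invertible_left_inverse by blast
  hence GiG: "matrix_inv G ** G = mat 1"
    unfolding invertible_def matrix_inv_def by (rule someI2_ex) auto
  have Tu: "normal_vector X u (nT u)" "lor (nT u) (nT u) = -1" "fst (nT u) > 0"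
    and Su: "normal_vector X u (nS u)" "lor (nS u) (nS u) = 1" and STu: "lor (nS u) (nT u) = 0"
    using assms(5,6,7,8) by auto
  define L where "L = (\<lambda>v. nT v + nS v)"
  have LG: "LG nT nS = L" unfolding L_def LG_def by (rule ext) simp
  define DL where "DL = (\<lambda>h. frechet_derivative nT (at u) h + frechet_derivative nS (at u) h)"
  have hL: "(L has_derivative DL) (at u)" unfolding L_def DL_def
    by (intro has_derivative_add Ck1_deriv[OF assms(3,8)] Ck1_deriv[OF assms(4,8)])
  define a where "a = fst (L u)"
  have apos: "a > 0" unfolding a_def L_def fst_add
    by (rule l0_pos[where A="snd (nT u)" and B="snd (nS u)"]) (use Tu Su STu in \<open>auto simp: lor_def\<close>)
  define e where "e = (axis i 1 :: real^'s)"
  have hLt: "(LGt nT nS has_derivative (\<lambda>h. inverse (fst (L u)) *\<^sub>R DL h +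
      (- (inverse (fst (L u)) * fst (DL h) * inverse (fst (L u)))) *\<^sub>R L u)) (at u)"
  proof -
    have eq: "LGt nT nS = (\<lambda>v. inverse (fst (L v)) *\<^sub>R L v)"
      unfolding LGt_def LG by (rule ext) (simp add: divide_inverse)
    have inv: "((\<lambda>v. inverse (fst (L v))) has_derivative
        (\<lambda>h. - (inverse (fst (L u)) * fst (DL h) * inverse (fst (L u))))) (at u)"
      using Deriv.has_derivative_inverse[OF _ has_derivative_fst[OF hL]] apos a_def by auto
    show ?thesis unfolding eq by (rule has_derivative_scaleR[OF inv hL])
  qed
  define v where "v = pderiv_at (LGt nT nS) i u"
  have v: "v = inverse a *\<^sub>R DL e + (- (inverse a * fst (DL e) * inverse a)) *\<^sub>R L u"
    unfolding v_def pderiv_at_def e_def a_def frechet_derivative_at[OF hLt, symmetric] by simp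
  have Lnorm: "lor (L u) (Xj k) = 0" for k
    using Tu(1) Su(1) unfolding L_def normal_vector_def Xj_def by (simp add: lor_add_left)
  have H: "hmat X nT nS u $ i $ k = - lor (DL e) (Xj k)" for k
  proof -
    have "pderiv_at (\<lambda>v. nT v + nS v) i u = DL e"
      unfolding pderiv_at_def e_def L_def[symmetric] frechet_derivative_at[OF hL, symmetric] ..
    thus ?thesis unfolding hmat_def Xj_def by (simp add: lor_minus_left)
  qed
  have lv: "lor v (Xj k) = - inverse a * hmat X nT nS u $ i $ k" for k
    unfolding v H by (simp add: lor_add_left lor_diff_left lor_scale_left Lnorm)
  define w0 where "w0 = - (\<Sum>j\<in>UNIV. ((1 / fst (LG nT nS u)) * hup X nT nS u i j) *\<^sub>R pderiv_at X j u)"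
  define h where "h = hmat X nT nS u"
  define Gi where "Gi = matrix_inv G"
  have lw0: "lor w0 (Xj k) = - inverse a * h $ i $ k" for k
  proof -
    have "lor w0 (Xj k) = - (\<Sum>j\<in>UNIV. ((1 / a) * hup X nT nS u i j) * G$j$k)"
      unfolding w0_def LG a_def Xj_def[symmetric]
      by (simp add: lor_minus_left lor_sum_left lor_scale_left Gjk)
    also have "\<dots> = - inverse a * (\<Sum>j\<in>UNIV. hup X nT nS u i j * G$j$k)"
      by (simp add: sum_distrib_left divide_inverse mult.assoc sum_negf)
    also have "(\<Sum>j\<in>UNIV. hup X nT nS u i j * G$j$k) = (\<Sum>j\<in>UNIV. (\<Sum>m\<in>UNIV. h$i$m * Gi$m$j) * G$j$k)"
      unfolding hup_def h_def Gi_def G_def ..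
    also have "(\<Sum>j\<in>UNIV. (\<Sum>m\<in>UNIV. h$i$m * Gi$m$j) * G$j$k) = (\<Sum>m\<in>UNIV. h$i$m * (Gi ** G)$m$k)"
      unfolding matrix_matrix_mult_def vec_lambda_beta sum_distrib_left sum_distrib_right mult.assoc
      by (rule sum.swap)
    also have "\<dots> = h $ i $ k" unfolding Gi_def GiG
      by (simp add: mat_def mult.commute[of _ "if _ then _ else _"] if_distrib sum.delta cong: if_cong)
    finally show ?thesis .
  qed
  have w0span: "w0 \<in> tangent_space X u"
    unfolding w0_def tangent_space_def
    by (intro span_neg span_sum span_scale span_base rangeI)
  have w0norm: "normal_vector X u (v - w0)"
    unfolding normal_vector_def
  proof
    fix k show "lor (v - w0) (pderiv_at X k u) = 0"
      using lv[of k] lw0[of k] unfolding Xj_def h_def by (simp only: lor_diff_left)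
  qed
  have uniq: "w = w0" if "w \<in> tangent_space X u" "normal_vector X u (v - w)" for w
  proof -
    have "range Xj \<subseteq> range dX" using Xj by auto
    moreover have "subspace (range dX)" using linear_subspace_image[OF linX subspace_UNIV] by simp
    ultimately have "span (range Xj) \<subseteq> range dX" by (rule span_minimal)
    moreover have "w - w0 \<in> span (range Xj)"
      using that(1) w0span unfolding tangent_space_def Xj_def[symmetric] by (rule span_diff)
    ultimately obtain c where c: "w - w0 = dX c" by blast
    have "lor (dX c) (Xj k) = 0" for k
    proof -
      have "dX c = (v - w0) - (v - w)" using c by (simp add: algebra_simps)
      thus ?thesis using that(2) w0norm unfolding normal_vector_def Xj_def by (simp only: lor_diff_left)
    qed
    hence "c = 0" using ker by blast
    thus ?thesis using c linear_0[OF linX] by simp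
  qed
  have "pi_tau X u v = w0"
    unfolding pi_tau_def apply (rule the_equality) using w0span w0norm uniq by blast+
  thus ?thesis unfolding v_def w0_def .
qed
end
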